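(* Let $\vec f=(f_1,\dots,f_n)$ be a profile of acknowledgement-based protocols, let $i\in[n]$, and fix a protocol $f_i'$ for player $i$. For $\tau^*\ge1$ and a history $h_{i,\tau^*}=(a_{i,1},\dots,a_{i,\tau^*})$ consistent with $(\vec f_{-i},f_i')$, let $r_i(h_{i,\tau^*})$ be the protocol that plays $a_{i,t}$ with probability $1$ at each slot $1\le t\le\tau^*$ and follows $f'_{i,t}$ for $t>\tau^*$. If there exists a finite $\tau^*\ge1$ such that $C_i^{(\vec f_{-i},r_i(h_{i,\tau^*}))}(h_0)\ge C_i^{(\vec f_{-i},f_i)}(h_0)$ for every such $h_{i,\tau^*}$, then $C_i^{(\vec f_{-i},f_i')}(h_0)\ge C_i^{(\vec f_{-i},f_i)}(h_0)$.
   Context: Contention game: $n$ players, channels $K=\{1,\dots,k\}$, slots $t=1,2,\dots$; each player has one packet, initially pending; in each slot a pending player chooses (possibly randomly) an action in $\{0,1,\dots,k\}$ ($0$ = idle, $a$ = transmit on channel $a$); a lone transmitter on a channel succeeds and leaves, colliding transmitters remain pending. Acknowledgement-based protocols: decision rules depend only on the player's personal action history; only transmitting players learn whether they succeeded. $T_i$ is player $i$'s latency and $C_i^{\vec g}(h_0)=\mathbb E[T_i\mid \vec g]$ her unconditional expected latency under profile $\vec g$; $(\vec f_{-i},g_i)$ is $\vec f$ with $f_i$ replaced by $g_i$. A history is consistent with a profile if it occurs for player $i$ with positive probability under it. *)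

theory Defs
  imports "HOL-Probability.Probability"
begin

(* An action is a natural number: 0 = idle, a \<in> {1..k} = transmit on channel a.
   A personal history is the list of the player's own past actions.
   An acknowledgement-based protocol maps the personal history to a distribution
   over the next action.  (While pending, a player only ever receives "failure"
   feedback, so the action history is the whole information.) *)
type_synonym protocol = "nat list \<Rightarrow> nat pmf"

definition valid_protocol :: "nat \<Rightarrow> protocol \<Rightarrow> bool" where
  "valid_protocol k g \<longleftrightarrow> (\<forall>h. set_pmf (g h) \<subseteq> {0..k})"

(* Global state: for every player j, (pending flag, personal action history).
   Players are 0..n-1.  After a player has succeeded, its protocol is still
   consulted (its "intended" action stream keeps being recorded) but these
   actions do not affect anybody. *)
type_synonym state = "nat \<Rightarrow> bool \<times> nat list"

definition lone_success :: "nat \<Rightarrow> state \<Rightarrow> (nat \<Rightarrow> nat) \<Rightarrow> nat \<Rightarrow> bool" where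
  "lone_success n s a j \<longleftrightarrow> fst (s j) \<and> a j \<noteq> 0 \<and>
      (\<forall>j'<n. j' \<noteq> j \<and> fst (s j') \<longrightarrow> a j' \<noteq> a j)"

definition step :: "nat \<Rightarrow> (nat \<Rightarrow> protocol) \<Rightarrow> state \<Rightarrow> state pmf" where
  "step n f s =
     map_pmf (\<lambda>a j. if j < n
                     then (fst (s j) \<and> \<not> lone_success n s a j, snd (s j) @ [a j])
                     else s j)
       (Pi_pmf {..<n} 0 (\<lambda>j. f j (snd (s j))))"

fun state_dist :: "nat \<Rightarrow> (nat \<Rightarrow> protocol) \<Rightarrow> nat \<Rightarrow> state pmf" where
  "state_dist n f 0 = return_pmf (\<lambda>j. (j < n, []))"
| "state_dist n f (Suc t) = bind_pmf (state_dist n f t) (step n f)"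

(* C_i^f(h_0) = E[T_i] = sum_{t>=0} Pr[T_i > t] = sum_t Pr[i still pending after t slots]
   (in [0,\<infinity>]) *)
definition exp_latency :: "nat \<Rightarrow> (nat \<Rightarrow> protocol) \<Rightarrow> nat \<Rightarrow> ennreal" where
  "exp_latency n f i = (\<Sum>t. ennreal (measure_pmf.prob (state_dist n f t) {s. fst (s i)}))"

definition consistent :: "nat \<Rightarrow> (nat \<Rightarrow> protocol) \<Rightarrow> nat \<Rightarrow> nat list \<Rightarrow> bool" where
  "consistent n f i h \<longleftrightarrow>
     measure_pmf.prob (state_dist n f (length h)) {s. snd (s i) = h} > 0"

definition replay :: "nat list \<Rightarrow> protocol \<Rightarrow> protocol" where
  "replay h g = (\<lambda>hist. if length hist < length h then return_pmf (h ! length hist) else g hist)"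

end

theory Submission
  imports Defs
begin

fun H :: "protocol \<Rightarrow> nat \<Rightarrow> nat list pmf" where
  "H g 0 = return_pmf []"
| "H g (Suc t) = bind_pmf (H g t) (\<lambda>x. map_pmf (\<lambda>a. x @ [a]) (g x))"

definition upd :: "nat \<Rightarrow> state \<Rightarrow> (nat \<Rightarrow> nat) \<Rightarrow> state" where
  "upd n s a = (\<lambda>j. if j < n then (fst (s j) \<and> \<not> lone_success n s a j, snd (s j) @ [a j]) else s j)"

fun Phi :: "nat \<Rightarrow> nat \<Rightarrow> (nat \<Rightarrow> nat list) \<Rightarrow> state" where
  "Phi n 0 hs = (\<lambda>j. (j < n, []))"
| "Phi n (Suc t) hs = upd n (Phi n t (\<lambda>j. butlast (hs j))) (\<lambda>j. last (hs j))"

definition J :: "nat \<Rightarrow> (nat \<Rightarrow> protocol) \<Rightarrow> nat \<Rightarrow> (nat \<Rightarrow> nat list) pmf" where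
  "J n f t = Pi_pmf {..<n} [] (\<lambda>j. H (f j) t)"

lemma set_H: "x \<in> set_pmf (H g t) \<Longrightarrow> length x = t"
  by (induction t arbitrary: x) auto

lemma set_J: "hs \<in> set_pmf (J n f t) \<Longrightarrow> (\<forall>j<n. length (hs j) = t) \<and> (\<forall>j. j \<ge> n \<longrightarrow> hs j = [])"
proof -
  assume hs: "hs \<in> set_pmf (J n f t)"
  have "hs \<in> PiE_dflt {..<n} [] (set_pmf \<circ> (\<lambda>j. H (f j) t))"
  proof -
    have "set_pmf (J n f t) = PiE_dflt {..<n} [] (set_pmf \<circ> (\<lambda>j. H (f j) t))"
      unfolding J_def by (rule set_Pi_pmf) simp
    then show ?thesis using hs by simp
  qed
  then have "\<forall>j. (j < n \<longrightarrow> hs j \<in> set_pmf (H (f j) t)) \<and> (\<not> j < n \<longrightarrow> hs j = [])"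
    unfolding PiE_dflt_def by simp
  then show ?thesis by (auto dest: set_H)
qed

lemma Phi_snd: "\<forall>j<n. length (hs j) = t \<Longrightarrow> j < n \<Longrightarrow> snd (Phi n t hs j) = hs j"
proof (induction t arbitrary: hs)
  case 0 then show ?case by simp
next
  case (Suc t)
  have "\<forall>j<n. length (butlast (hs j)) = t" using Suc.prems by simp
  then have "snd (Phi n t (\<lambda>j. butlast (hs j)) j) = butlast (hs j)" using Suc.IH[of "\<lambda>j. butlast (hs j)"] Suc.prems(2) by simp
  moreover have "hs j \<noteq> []" using Suc.prems by auto
  ultimately show ?case using Suc.prems by (simp add: upd_def)
qed

lemma upd_cong: "(\<And>j. j < n \<Longrightarrow> a j = b j) \<Longrightarrow> upd n s a = upd n s b"
  unfolding upd_def lone_success_def by (intro ext) auto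

lemma step_upd: "step n f s = map_pmf (upd n s) (Pi_pmf {..<n} 0 (\<lambda>j. f j (snd (s j))))"
  unfolding step_def upd_def ..

lemma Pi_map_gen:
  assumes "finite A"
  shows "Pi_pmf A d (\<lambda>j. map_pmf (g j) (P j)) =
         map_pmf (\<lambda>a j. if j \<in> A then g j (a j) else d) (Pi_pmf A d' P)"
proof -
  have "Pi_pmf A d (\<lambda>j. map_pmf (g j) (P j)) = Pi_pmf A d (\<lambda>j. bind_pmf (P j) (\<lambda>a. return_pmf (g j a)))"
    by (simp add: map_pmf_def)
  also have "\<dots> = bind_pmf (Pi_pmf A d' P) (\<lambda>a. Pi_pmf A d (\<lambda>j. return_pmf (g j (a j))))"
    by (rule Pi_pmf_bind[OF assms])
  also have "\<dots> = map_pmf (\<lambda>a j. if j \<in> A then g j (a j) else d) (Pi_pmf A d' P)"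
    using assms by (simp add: map_pmf_def)
  finally show ?thesis .
qed

lemma state_dist_rep: "state_dist n f t = map_pmf (Phi n t) (J n f t)"
proof (induction t)
  case 0
  show ?case by (simp add: J_def)
next
  case (Suc t)
  have J1: "J n f (Suc t) = bind_pmf (J n f t) (\<lambda>hs. map_pmf (\<lambda>a j. if j < n then hs j @ [a j] else [])
              (Pi_pmf {..<n} 0 (\<lambda>j. f j (hs j))))"
  proof -
    have "J n f (Suc t) = bind_pmf (J n f t) (\<lambda>hs. Pi_pmf {..<n} [] (\<lambda>j. map_pmf (\<lambda>a. hs j @ [a]) (f j (hs j))))"
      unfolding J_def by (simp add: Pi_pmf_bind[where d'="[]"])
    also have "\<dots> = bind_pmf (J n f t) (\<lambda>hs. map_pmf (\<lambda>a j. if j < n then hs j @ [a j] else [])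
              (Pi_pmf {..<n} 0 (\<lambda>j. f j (hs j))))"
      by (subst Pi_map_gen[where d'=0]) auto
    finally show ?thesis .
  qed
  have "state_dist n f (Suc t) = bind_pmf (J n f t) (\<lambda>hs. step n f (Phi n t hs))"
    using Suc by (simp add: bind_map_pmf)
  also have "\<dots> = bind_pmf (J n f t) (\<lambda>hs. map_pmf (Phi n (Suc t)) (map_pmf (\<lambda>a j. if j < n then hs j @ [a j] else [])
              (Pi_pmf {..<n} 0 (\<lambda>j. f j (hs j)))))"
  proof (rule bind_pmf_cong[OF refl])
    fix hs assume hs: "hs \<in> set_pmf (J n f t)"
    note L = set_J[OF hs]
    have e1: "Pi_pmf {..<n} 0 (\<lambda>j. f j (snd (Phi n t hs j))) = Pi_pmf {..<n} 0 (\<lambda>j. f j (hs j))"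
      by (rule Pi_pmf_cong) (auto simp: Phi_snd L)
    show "step n f (Phi n t hs) = map_pmf (Phi n (Suc t)) (map_pmf (\<lambda>a j. if j < n then hs j @ [a j] else [])
              (Pi_pmf {..<n} 0 (\<lambda>j. f j (hs j))))"
      unfolding step_upd e1 map_pmf_comp
    proof (rule map_pmf_cong[OF refl])
      fix a
      have b: "(\<lambda>j. butlast (if j < n then hs j @ [a j] else [])) = hs"
        using L by (auto simp: fun_eq_iff)
      show "upd n (Phi n t hs) a = Phi n (Suc t) (\<lambda>j. if j < n then hs j @ [a j] else [])"
        unfolding Phi.simps b by (rule upd_cong) simp
    qed
  qed
  also have "\<dots> = map_pmf (Phi n (Suc t)) (J n f (Suc t))"
    unfolding J1 map_bind_pmf ..
  finally show ?case .
qed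

lemma H_take: "t \<le> tau \<Longrightarrow> map_pmf (take t) (H g tau) = H g t"
proof (induction tau)
  case 0 then show ?case by simp
next
  case (Suc tau)
  show ?case
  proof (cases "t = Suc tau")
    case True
    have "map_pmf (take t) (H g (Suc tau)) = map_pmf (\<lambda>x. x) (H g (Suc tau))"
      by (rule map_pmf_cong) (auto simp: True dest: set_H)
    then show ?thesis using True by simp
  next
    case False
    then have le: "t \<le> tau" using Suc.prems by simp
    have "map_pmf (take t) (H g (Suc tau)) = bind_pmf (H g tau) (\<lambda>x. map_pmf (\<lambda>a. take t (x @ [a])) (g x))"
      by (simp add: map_bind_pmf map_pmf_comp)
    also have "\<dots> = bind_pmf (H g tau) (\<lambda>x. return_pmf (take t x))"
    proof (rule bind_pmf_cong[OF refl])
      fix x assume "x \<in> set_pmf (H g tau)"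
      then have "length x = tau" by (rule set_H)
      then have "(\<lambda>a. take t (x @ [a])) = (\<lambda>a. take t x)" using le by auto
      then show "map_pmf (\<lambda>a. take t (x @ [a])) (g x) = return_pmf (take t x)" by simp
    qed
    also have "\<dots> = map_pmf (take t) (H g tau)" by (simp add: map_pmf_def)
    also have "\<dots> = H g t" using Suc.IH le by simp
    finally show ?thesis .
  qed
qed

lemma H_replay_prefix: "length h = tau \<Longrightarrow> t \<le> tau \<Longrightarrow> H (replay h g) t = return_pmf (take t h)"
proof (induction t)
  case 0 then show ?case by simp
next
  case (Suc t)
  then have "H (replay h g) t = return_pmf (take t h)" by simp
  moreover have "replay h g (take t h) = return_pmf (h ! t)"
    using Suc.prems by (simp add: replay_def)
  moreover have "take t h @ [h ! t] = take (Suc t) h"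
    using Suc.prems by (simp add: take_Suc_conv_app_nth)
  ultimately show ?case by (simp add: bind_return_pmf)
qed

lemma H_mix_le: "t \<le> tau \<Longrightarrow> H g t = bind_pmf (H g tau) (\<lambda>h. H (replay h g) t)"
proof -
  assume le: "t \<le> tau"
  have "bind_pmf (H g tau) (\<lambda>h. H (replay h g) t) = bind_pmf (H g tau) (\<lambda>h. return_pmf (take t h))"
  proof (rule bind_pmf_cong[OF refl])
    fix x assume "x \<in> set_pmf (H g tau)"
    then have "length x = tau" by (rule set_H)
    then show "H (replay x g) t = return_pmf (take t x)" using le by (simp add: H_replay_prefix)
  qed
  also have "\<dots> = map_pmf (take t) (H g tau)" by (simp add: map_pmf_def)
  finally show ?thesis using H_take[OF le] by simp
qed

lemma H_mix: "H g t = bind_pmf (H g tau) (\<lambda>h. H (replay h g) t)"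
proof (induction t)
  case 0 then show ?case by (rule H_mix_le) simp
next
  case (Suc t)
  show ?case
  proof (cases "Suc t \<le> tau")
    case True then show ?thesis by (rule H_mix_le)
  next
    case False
    have "H g (Suc t) = bind_pmf (H g tau) (\<lambda>h. bind_pmf (H (replay h g) t) (\<lambda>x. map_pmf (\<lambda>a. x @ [a]) (g x)))"
      unfolding H.simps by (subst Suc.IH) (simp add: bind_assoc_pmf)
    also have "\<dots> = bind_pmf (H g tau) (\<lambda>h. H (replay h g) (Suc t))"
    proof (rule bind_pmf_cong[OF refl])
      fix h assume h: "h \<in> set_pmf (H g tau)"
      show "bind_pmf (H (replay h g) t) (\<lambda>x. map_pmf (\<lambda>a. x @ [a]) (g x)) = H (replay h g) (Suc t)"
        unfolding H.simps
      proof (rule bind_pmf_cong[OF refl])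
        fix x assume "x \<in> set_pmf (H (replay h g) t)"
        then have "length x = t" by (rule set_H)
        moreover have "length h = tau" using h by (rule set_H)
        ultimately show "map_pmf (\<lambda>a. x @ [a]) (g x) = map_pmf (\<lambda>a. x @ [a]) (replay h g x)"
          using False by (simp add: replay_def)
      qed
    qed
    finally show ?thesis .
  qed
qed

lemma Pi_mix:
  assumes "finite A" "i \<in> A"
  shows "Pi_pmf A d (M(i := bind_pmf W K)) = bind_pmf W (\<lambda>w. Pi_pmf A d (M(i := K w)))"
proof -
  define p where "p = (\<lambda>x. if x = i then W else return_pmf undefined)"
  define q where "q = (\<lambda>x w. if x = i then K w else M x)"
  have "Pi_pmf A d (M(i := bind_pmf W K)) = Pi_pmf A d (\<lambda>x. bind_pmf (p x) (q x))"
    by (rule Pi_pmf_cong) (auto simp: p_def q_def bind_return_pmf)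
  also have "\<dots> = bind_pmf (Pi_pmf A d' p) (\<lambda>f. Pi_pmf A d (\<lambda>x. q x (f x)))"
    by (rule Pi_pmf_bind[OF assms(1)])
  also have "\<dots> = bind_pmf (Pi_pmf A d' p) (\<lambda>f. Pi_pmf A d (M(i := K (f i))))"
    by (rule bind_pmf_cong[OF refl], rule Pi_pmf_cong) (auto simp: q_def)
  also have "\<dots> = bind_pmf (map_pmf (\<lambda>f. f i) (Pi_pmf A d' p)) (\<lambda>w. Pi_pmf A d (M(i := K w)))"
    by (simp add: bind_map_pmf)
  also have "map_pmf (\<lambda>f. f i) (Pi_pmf A d' p) = W"
    using assms by (simp add: Pi_pmf_component p_def)
  finally show ?thesis .
qed


lemma state_mix:
  assumes "i < n"
  shows "state_dist n (f(i := g)) t = bind_pmf (H g tau) (\<lambda>h. state_dist n (f(i := replay h g)) t)"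
proof -
  have "J n (f(i := g)) t = Pi_pmf {..<n} [] ((\<lambda>j. H (f j) t)(i := bind_pmf (H g tau) (\<lambda>h. H (replay h g) t)))"
    unfolding J_def
  proof (rule Pi_pmf_cong)
    fix x
    show "H ((f(i := g)) x) t = ((\<lambda>j. H (f j) t)(i := bind_pmf (H g tau) (\<lambda>h. H (replay h g) t))) x"
    proof (cases "x = i")
      case True then show ?thesis using H_mix[of g t tau] by simp
    qed simp
  qed auto
  also have "\<dots> = bind_pmf (H g tau) (\<lambda>h. Pi_pmf {..<n} [] ((\<lambda>j. H (f j) t)(i := H (replay h g) t)))"
    by (rule Pi_mix) (auto simp: assms)
  also have "\<dots> = bind_pmf (H g tau) (\<lambda>h. J n (f(i := replay h g)) t)"
    unfolding J_def by (rule bind_pmf_cong[OF refl], rule Pi_pmf_cong) auto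
  finally show ?thesis by (simp add: state_dist_rep map_bind_pmf)
qed

lemma hist_marg:
  assumes "i < n"
  shows "map_pmf (\<lambda>s. snd (s i)) (state_dist n f t) = H (f i) t"
proof -
  have "map_pmf (\<lambda>s. snd (s i)) (state_dist n f t) = map_pmf (\<lambda>hs. hs i) (J n f t)"
    unfolding state_dist_rep map_pmf_comp
    by (rule map_pmf_cong[OF refl]) (simp add: Phi_snd set_J assms)
  also have "\<dots> = H (f i) t"
    unfolding J_def by (subst Pi_pmf_component) (auto simp: assms)
  finally show ?thesis .
qed

theorem corollary1:
  fixes n k i :: nat and f :: "nat \<Rightarrow> protocol" and f' :: protocol
  assumes "\<forall>j<n. valid_protocol k (f j)"
    and "valid_protocol k f'"
    and "i < n"
    and "\<exists>\<tau>\<ge>1. \<forall>h. length h = \<tau> \<and> consistent n (f(i := f')) i h \<longrightarrow>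
            exp_latency n (f(i := replay h f')) i \<ge> exp_latency n f i"
  shows "exp_latency n (f(i := f')) i \<ge> exp_latency n f i"
proof -
  obtain tau where A: "\<forall>h. length h = tau \<and> consistent n (f(i := f')) i h \<longrightarrow>
            exp_latency n (f(i := replay h f')) i \<ge> exp_latency n f i"
    using assms(4) by blast
  define W where "W = H f' tau"
  have el: "exp_latency n F i = (\<Sum>t. emeasure (measure_pmf (state_dist n F t)) {s. fst (s i)})" for F
    by (simp add: exp_latency_def measure_pmf.emeasure_eq_measure)
  have "exp_latency n (f(i := f')) i =
      (\<Sum>t. \<integral>\<^sup>+h. emeasure (measure_pmf (state_dist n (f(i := replay h f')) t)) {s. fst (s i)} \<partial>measure_pmf W)"
    unfolding el W_def by (simp add: state_mix[OF assms(3), of f f' _ tau])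
  also have "\<dots> = (\<integral>\<^sup>+h. (\<Sum>t. emeasure (measure_pmf (state_dist n (f(i := replay h f')) t)) {s. fst (s i)}) \<partial>measure_pmf W)"
    by (rule nn_integral_suminf[symmetric]) simp
  also have "\<dots> = (\<integral>\<^sup>+h. exp_latency n (f(i := replay h f')) i \<partial>measure_pmf W)"
    unfolding el ..
  also have "\<dots> \<ge> (\<integral>\<^sup>+h. exp_latency n f i \<partial>measure_pmf W)"
  proof (rule nn_integral_mono_AE, rule AE_pmfI)
    fix h assume h: "h \<in> set_pmf W"
    have len: "length h = tau" using h unfolding W_def by (rule set_H)
    have "measure_pmf.prob (state_dist n (f(i := f')) tau) {s. snd (s i) = h}
          = measure_pmf.prob (map_pmf (\<lambda>s. snd (s i)) (state_dist n (f(i := f')) tau)) {h}"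
      by (simp add: vimage_def)
    also have "\<dots> = pmf W h"
      unfolding hist_marg[OF assms(3)] W_def by (simp add: measure_pmf_single)
    finally have "consistent n (f(i := f')) i h"
      unfolding consistent_def using h len by (simp add: pmf_positive)
    then show "exp_latency n f i \<le> exp_latency n (f(i := replay h f')) i"
      using A len by blast
  qed
  also have "(\<integral>\<^sup>+h. exp_latency n f i \<partial>measure_pmf W) = exp_latency n f i"
    by (simp add: measure_pmf.emeasure_space_1)
  finally show ?thesis .
qed

end
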